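(* Let $A,B\in\mathbb D[X]$ both have degree $d$ and valuation $0$, with symmetric subresultants $(S_i)_{-1\le i\le d}$. Let $j\in\{1,\dots,d-1\}$ be such that $(S_j,S_{j+1})$ is $(\alpha,\beta)$-defective, and put $k=j+\alpha+\beta$. Then the symmetric quotient $\mathrm{squo}\big(\mathrm{lc}(S_{j+1})S_k(0)S_j,\ S_{j+1}\big)$ belongs to $\mathbb D[X]$, and so does the symmetric remainder $\mathrm{srem}\big(\mathrm{lc}(S_{j+1})S_k(0)S_j,\ S_{j+1}\big)$.
   Context: Let $\mathbb D$ be a subring of $\mathbb C$, $\mathbb D'$ its fraction field. For a nonzero polynomial $P$: $v(P)$ is the largest $v$ with $X^v\mid P$; $\mathrm{lc}(P)$ is its leading coefficient. Symmetric subresultants: let $A=\sum_{i=0}^d a_iX^i$, $B=\sum_{i=0}^d b_iX^i\in\mathbb D[X]$ with $\deg A=d\ge1$ ($B$ of formal degree $d$). Put $a_i=b_i=0$ for $i<0$ or $i>d$. For $1\le j\le d$ and $0\le\ell\le d-j$, let $\mathrm{Sylv}_{j,\ell}$ be the $2j\times 2j$ matrix whose $r$-th row, for $1\le r\le j$, is $(a_{1-r},a_{2-r},\dots,a_{j-1-r},\ a_{j-r+\ell},\ a_{d+1-r},a_{d+2-r},\dots,a_{d+j-r})$, and whose $(j+r)$-th row is the same with every $a$ replaced by $b$. The symmetric subresultants of $(A,B)$ are $S_{-1}=A$, $S_0=B$, $S_j=\sum_{\ell=0}^{d-j}\det(\mathrm{Sylv}_{j,\ell})X^\ell$ for $1\le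 j\le d$. Defectivity: for $0\le j\le d-1$, the pair $(S_j,S_{j+1})$ is $(\alpha,\beta)$-defective if $v(S_j)=0$, $\deg S_j=d-j$, $S_{j+1}\ne0$, $v(S_{j+1})=\alpha$ and $\deg S_{j+1}=d-j-\beta$. Symmetric division: for $P,P_1\in\mathbb D[X]$ with $P_1\neq0$, $\deg P=n\ge\deg P_1=n-\beta$, $v(P_1)=\alpha$, $\mathrm{squo}(P,P_1)$ and $\mathrm{srem}(P,P_1)$ are the unique $Q,R\in\mathbb D'[X]$ with $\deg Q=\alpha+\beta$, $\deg R<n-\alpha-\beta$ and $P=Q\,P_1/X^\alpha+X^\beta R$. *)

theory Defs
  imports "HOL-Computational_Algebra.Polynomial" "Jordan_Normal_Form.Determinant"
begin

definition subring_C :: "complex set \<Rightarrow> bool" where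
  "subring_C D \<longleftrightarrow> 0 \<in> D \<and> 1 \<in> D \<and>
     (\<forall>x\<in>D. \<forall>y\<in>D. x + y \<in> D \<and> x - y \<in> D \<and> x * y \<in> D)"

definition in_Dpoly :: "complex set \<Rightarrow> complex poly \<Rightarrow> bool" where
  "in_Dpoly D p \<longleftrightarrow> (\<forall>i. coeff p i \<in> D)"

definition val :: "complex poly \<Rightarrow> nat" where
  "val P = order 0 P"

definition cf :: "complex poly \<Rightarrow> nat \<Rightarrow> int \<Rightarrow> complex" where
  "cf P d i = (if 0 \<le> i \<and> i \<le> int d then coeff P (nat i) else 0)"

text \<open>Entry in 1-based row r (1..j) and column c (1..2j) of the block built from a.\<close>
definition sylv_entry :: "(int \<Rightarrow> complex) \<Rightarrow> int \<Rightarrow> int \<Rightarrow> int \<Rightarrow> int \<Rightarrow> int \<Rightarrow> complex" where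
  "sylv_entry a d j l r c =
     (if c < j then a (c - r)
      else if c = j then a (j - r + l)
      else a (d + (c - j) - r))"

text \<open>The 2j x 2j matrix Sylv_{j,l} (0-based Isabelle indices, translated to 1-based).\<close>
definition Sylv :: "complex poly \<Rightarrow> complex poly \<Rightarrow> nat \<Rightarrow> nat \<Rightarrow> nat \<Rightarrow> complex mat" where
  "Sylv A B d j l = mat (2*j) (2*j) (\<lambda>(r, c).
     (let r' = int r + 1; c' = int c + 1 in
      if r' \<le> int j then sylv_entry (cf A d) (int d) (int j) (int l) r' c'
      else sylv_entry (cf B d) (int d) (int j) (int l) (r' - int j) c'))"

definition symsubres :: "complex poly \<Rightarrow> complex poly \<Rightarrow> int \<Rightarrow> complex poly" where
  "symsubres A B j =
     (if j = -1 then A else if j = 0 then B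
      else (\<Sum>l = 0..degree A - nat j.
              monom (det (Sylv A B (degree A) (nat j) l)) l))"

definition defective :: "complex poly \<Rightarrow> complex poly \<Rightarrow> nat \<Rightarrow> nat \<Rightarrow> nat \<Rightarrow> bool" where
  "defective A B j \<alpha> \<beta> \<longleftrightarrow>
     (let d = degree A; Sj = symsubres A B (int j); S1 = symsubres A B (int j + 1) in
      val Sj = 0 \<and> degree Sj = d - j \<and> S1 \<noteq> 0 \<and> val S1 = \<alpha> \<and> degree S1 = d - j - \<beta>)"

definition sdiv_rel :: "complex poly \<Rightarrow> complex poly \<Rightarrow> complex poly \<Rightarrow> complex poly \<Rightarrow> bool" where
  "sdiv_rel P P1 Q R \<longleftrightarrow>
     (let n = degree P; \<alpha> = val P1; \<beta> = degree P - degree P1 in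
      degree Q = \<alpha> + \<beta> \<and> (R = 0 \<or> degree R < n - \<alpha> - \<beta>) \<and>
      P = Q * (P1 div [:0, 1:] ^ \<alpha>) + [:0, 1:] ^ \<beta> * R)"

definition squo :: "complex poly \<Rightarrow> complex poly \<Rightarrow> complex poly" where
  "squo P P1 = fst (THE (Q, R). sdiv_rel P P1 Q R)"

definition srem :: "complex poly \<Rightarrow> complex poly \<Rightarrow> complex poly" where
  "srem P P1 = snd (THE (Q, R). sdiv_rel P P1 Q R)"

end

theory Submission
  imports Defs
begin

definition rowp :: "complex poly \<Rightarrow> complex poly \<Rightarrow> nat \<Rightarrow> nat \<Rightarrow> complex poly" where
  "rowp A B i r = (if r < i then monom 1 r * A else monom 1 (r - i) * B)"

definition colp :: "nat \<Rightarrow> nat \<Rightarrow> nat \<Rightarrow> nat \<Rightarrow> nat" where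
  "colp d i q c = (if c < i - 1 then c else if c = i - 1 then q else d + (c - i))"

definition mk :: "(nat \<Rightarrow> complex poly) \<Rightarrow> (nat \<Rightarrow> nat) \<Rightarrow> nat \<Rightarrow> complex mat" where
  "mk rs cs n = mat n n (\<lambda>(r,c). coeff (rs r) (cs c))"

lemma mk_carrier[simp]: "mk rs cs n \<in> carrier_mat n n"
  unfolding mk_def by simp

lemma mk_dim[simp]: "dim_row (mk rs cs n) = n" "dim_col (mk rs cs n) = n"
  unfolding mk_def by simp_all

lemma mk_index[simp]: "r < n \<Longrightarrow> c < n \<Longrightarrow> mk rs cs n $$ (r,c) = coeff (rs r) (cs c)"
  unfolding mk_def by simp

lemma cf_eq:
  assumes "degree P \<le> d"
  shows "cf P d (int a - int b) = coeff (monom 1 b * P) a"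
proof -
  have "coeff (monom 1 b * P) a = (if a < b then 0 else coeff P (a - b))"
    by (simp add: coeff_monom_mult)
  moreover have "a \<ge> b \<Longrightarrow> a - b > d \<Longrightarrow> coeff P (a - b) = 0"
    using assms by (simp add: coeff_eq_0)
  ultimately show ?thesis unfolding cf_def
    by (auto simp: nat_diff_distrib' of_nat_diff)
qed

lemma Sylv_mk:
  assumes dA: "degree A = d" and dB: "degree B = d" and i: "1 \<le> i"
  shows "Sylv A B d i l = mk (rowp A B i) (colp d i (i - 1 + l)) (2*i)"
proof (rule eq_matI)
  show "dim_row (Sylv A B d i l) = dim_row (mk (rowp A B i) (colp d i (i - 1 + l)) (2 * i))"
    unfolding Sylv_def mk_def by simp
  show "dim_col (Sylv A B d i l) = dim_col (mk (rowp A B i) (colp d i (i - 1 + l)) (2 * i))"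
    unfolding Sylv_def mk_def by simp
  fix r c assume r: "r < dim_row (mk (rowp A B i) (colp d i (i - 1 + l)) (2 * i))"
    and c: "c < dim_col (mk (rowp A B i) (colp d i (i - 1 + l)) (2 * i))"
  hence r: "r < 2*i" and c: "c < 2*i" by (auto simp: mk_def)
  have key: "sylv_entry (cf P d) (int d) (int i) (int l) (int r0 + 1) (int c + 1)
      = coeff (monom 1 r0 * P) (colp d i (i - 1 + l) c)" if "degree P \<le> d" for P r0
  proof -
    consider (lo) "c < i - 1" | (mid) "c = i - 1" | (hi) "c \<ge> i" by linarith
    then show ?thesis
    proof cases
      case lo
      hence lt: "int c + 1 < int i" by linarith
      have "sylv_entry (cf P d) (int d) (int i) (int l) (int r0 + 1) (int c + 1)
          = cf P d (int c + 1 - (int r0 + 1))" unfolding sylv_entry_def using lt by simp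
      also have "int c + 1 - (int r0 + 1) = int c - int r0" by simp
      also have "cf P d (int c - int r0) = coeff (monom 1 r0 * P) c" by (rule cf_eq[OF that])
      also have "coeff (monom 1 r0 * P) c = coeff (monom 1 r0 * P) (colp d i (i - 1 + l) c)" using lo by (simp add: colp_def)
      finally show ?thesis .
    next
      case mid
      hence eq: "int c + 1 = int i" using i by linarith
      have "sylv_entry (cf P d) (int d) (int i) (int l) (int r0 + 1) (int c + 1)
          = cf P d (int i - (int r0 + 1) + int l)" unfolding sylv_entry_def using eq by simp
      also have "int i - (int r0 + 1) + int l = int (i - 1 + l) - int r0" using i by simp
      also have "cf P d (int (i - 1 + l) - int r0) = coeff (monom 1 r0 * P) (i - 1 + l)" by (rule cf_eq[OF that])
      also have "coeff (monom 1 r0 * P) (i - 1 + l) = coeff (monom 1 r0 * P) (colp d i (i - 1 + l) c)" using mid by (simp add: colp_def)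
      finally show ?thesis .
    next
      case hi
      hence n1: "\<not> int c + 1 < int i" "int c + 1 \<noteq> int i" by linarith+
      have cp: "d + (c - i) = colp d i (i - 1 + l) c" using hi i unfolding colp_def by auto
      have "sylv_entry (cf P d) (int d) (int i) (int l) (int r0 + 1) (int c + 1)
          = cf P d (int d + (int c + 1 - int i) - (int r0 + 1))" unfolding sylv_entry_def using n1 by simp
      also have "int d + (int c + 1 - int i) - (int r0 + 1) = int (d + (c - i)) - int r0"
        using hi by simp
      also have "cf P d (int (d + (c - i)) - int r0) = coeff (monom 1 r0 * P) (d + (c - i))" by (rule cf_eq[OF that])
      also have "coeff (monom 1 r0 * P) (d + (c - i)) = coeff (monom 1 r0 * P) (colp d i (i - 1 + l) c)"
        using cp by simp
      finally show ?thesis .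
    qed
  qed
  have S: "Sylv A B d i l $$ (r,c) = (if int r + 1 \<le> int i
      then sylv_entry (cf A d) (int d) (int i) (int l) (int r + 1) (int c + 1)
      else sylv_entry (cf B d) (int d) (int i) (int l) (int r + 1 - int i) (int c + 1))"
    unfolding Sylv_def using r c by (simp add: Let_def)
  show "Sylv A B d i l $$ (r, c) = mk (rowp A B i) (colp d i (i - 1 + l)) (2 * i) $$ (r, c)"
  proof (cases "r < i")
    case True
    hence le: "int r + 1 \<le> int i" by simp
    have "Sylv A B d i l $$ (r,c) = sylv_entry (cf A d) (int d) (int i) (int l) (int r + 1) (int c + 1)"
      unfolding S using le by simp
    also have "\<dots> = coeff (monom 1 r * A) (colp d i (i - 1 + l) c)" by (rule key) (simp add: dA)
    also have "\<dots> = mk (rowp A B i) (colp d i (i - 1 + l)) (2 * i) $$ (r, c)"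
      using r c True by (simp add: rowp_def)
    finally show ?thesis .
  next
    case False
    hence le: "\<not> int r + 1 \<le> int i" and e: "int r + 1 - int i = int (r - i) + 1" by simp_all
    have "Sylv A B d i l $$ (r,c) = sylv_entry (cf B d) (int d) (int i) (int l) (int r + 1 - int i) (int c + 1)"
      unfolding S using le by simp
    also have "\<dots> = sylv_entry (cf B d) (int d) (int i) (int l) (int (r - i) + 1) (int c + 1)"
      by (simp only: e)
    also have "\<dots> = coeff (monom 1 (r - i) * B) (colp d i (i - 1 + l) c)" by (rule key) (simp add: dB)
    also have "\<dots> = mk (rowp A B i) (colp d i (i - 1 + l)) (2 * i) $$ (r, c)"
      using r c False by (simp add: rowp_def)
    finally show ?thesis .
  qed
qed

lemma cofactor_cong:
  assumes M: "M \<in> carrier_mat n n" and M': "M' \<in> carrier_mat n n"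
    and eq: "\<And>r c. r < n \<Longrightarrow> c < n \<Longrightarrow> c \<noteq> q \<Longrightarrow> M $$ (r,c) = M' $$ (r,c)"
  shows "cofactor M r q = cofactor M' r q"
proof -
  have "mat_delete M r q = mat_delete M' r q"
    unfolding mat_delete_def using M M'
    by (intro eq_matI) (auto intro!: eq)
  thus ?thesis unfolding cofactor_def by simp
qed

lemma det_replace_col:
  assumes M: "M \<in> carrier_mat n n" and q: "q < n"
  shows "det (mat n n (\<lambda>(r,c). if c = q then w r else M $$ (r,c)))
       = (\<Sum>r<n. w r * cofactor M r q)"
proof -
  let ?N = "mat n n (\<lambda>(r,c). if c = q then w r else M $$ (r,c))"
  have N: "?N \<in> carrier_mat n n" by simp
  have "det ?N = (\<Sum>r<n. ?N $$ (r,q) * cofactor ?N r q)"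
    by (rule laplace_expansion_column[OF N q])
  also have "\<dots> = (\<Sum>r<n. w r * cofactor M r q)"
  proof (rule sum.cong[OF refl])
    fix r assume r: "r \<in> {..<n}"
    have "cofactor ?N r q = cofactor M r q"
      by (rule cofactor_cong[OF N M]) auto
    thus "?N $$ (r,q) * cofactor ?N r q = w r * cofactor M r q" using r q by simp
  qed
  finally show ?thesis .
qed

lemma cofactor_proportional:
  assumes M: "M \<in> carrier_mat n n" and q: "q < n"
    and y: "\<And>c. c < n \<Longrightarrow> c \<noteq> q \<Longrightarrow> (\<Sum>r<n. y r * M $$ (r,c)) = 0"
    and r': "r' < n"
  shows "det M * y r' = (\<Sum>r<n. y r * M $$ (r,q)) * cofactor M r' q"
proof -
  have adj: "M * adj_mat M = det M \<cdot>\<^sub>m 1\<^sub>m n" using adj_mat[OF M] by simp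
  have ent: "(\<Sum>c<n. M $$ (r,c) * cofactor M r' c) = (if r = r' then det M else 0)"
    if r: "r < n" for r
  proof -
    have "(M * adj_mat M) $$ (r,r') = (\<Sum>c<n. M $$ (r,c) * cofactor M r' c)"
      using M r r' unfolding adj_mat_def
      by (auto simp: times_mat_def scalar_prod_def atLeast0LessThan intro!: sum.cong)
    moreover have "(M * adj_mat M) $$ (r,r') = (if r = r' then det M else 0)"
      unfolding adj using r r' by simp
    ultimately show ?thesis by simp
  qed
  have "det M * y r' = (\<Sum>r<n. y r * (if r = r' then det M else 0))"
    using r' by (simp add: if_distrib sum.delta' mult.commute cong: if_cong)
  also have "\<dots> = (\<Sum>r<n. y r * (\<Sum>c<n. M $$ (r,c) * cofactor M r' c))"
    by (intro sum.cong refl) (simp add: ent)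
  also have "\<dots> = (\<Sum>r<n. \<Sum>c<n. y r * M $$ (r,c) * cofactor M r' c)"
    by (simp add: sum_distrib_left mult.assoc)
  also have "\<dots> = (\<Sum>c<n. \<Sum>r<n. y r * M $$ (r,c) * cofactor M r' c)"
    by (rule sum.swap)
  also have "\<dots> = (\<Sum>c<n. (\<Sum>r<n. y r * M $$ (r,c)) * cofactor M r' c)"
    by (simp add: sum_distrib_right)
  also have "\<dots> = (\<Sum>c<n. if c = q then (\<Sum>r<n. y r * M $$ (r,q)) * cofactor M r' q else 0)"
    by (intro sum.cong refl) (auto simp: y)
  also have "\<dots> = (\<Sum>r<n. y r * M $$ (r,q)) * cofactor M r' q"
    using q by (simp add: sum.delta')
  finally show ?thesis .
qed

lemma det_zero_left_kernel:
  assumes M: "(M :: complex mat) \<in> carrier_mat n n" and d0: "det M = 0"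
  shows "\<exists>y. (\<exists>r<n. y r \<noteq> 0) \<and> (\<forall>c<n. (\<Sum>r<n. y r * M $$ (r,c)) = 0)"
proof -
  have MT: "transpose_mat M \<in> carrier_mat n n" using M by simp
  have "det (transpose_mat M) = 0" using d0 det_transpose[OF M] by simp
  then obtain v where v: "v \<in> carrier_vec n" "v \<noteq> 0\<^sub>v n" "transpose_mat M *\<^sub>v v = 0\<^sub>v n"
    using det_0_iff_vec_prod_zero[OF MT] by blast
  have "\<exists>r<n. v $ r \<noteq> 0"
  proof (rule ccontr)
    assume "\<not> ?thesis"
    hence "v = 0\<^sub>v n" using v(1) by (intro eq_vecI) auto
    thus False using v(2) by simp
  qed
  moreover have "(\<Sum>r<n. v $ r * M $$ (r,c)) = 0" if c: "c < n" for c
  proof -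
    have "(transpose_mat M *\<^sub>v v) $ c = 0" using v(3) c by simp
    moreover have "(transpose_mat M *\<^sub>v v) $ c = (\<Sum>r<n. v $ r * M $$ (r,c))"
      using M c v(1) by (auto simp: mult_mat_vec_def scalar_prod_def atLeast0LessThan mult.commute intro!: sum.cong)
    ultimately show ?thesis by simp
  qed
  ultimately show ?thesis by (intro exI[of _ "\<lambda>r. v $ r"]) auto
qed

lemma subring_C_sum: "subring_C D \<Longrightarrow> (\<And>x. x \<in> S \<Longrightarrow> f x \<in> D) \<Longrightarrow> sum f S \<in> D"
  unfolding subring_C_def
  by (induction S rule: infinite_finite_induct) auto

lemma subring_C_prod: "subring_C D \<Longrightarrow> (\<And>x. x \<in> S \<Longrightarrow> f x \<in> D) \<Longrightarrow> prod f S \<in> D"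
  unfolding subring_C_def
  by (induction S rule: infinite_finite_induct) auto

lemma subring_C_uminus: "subring_C D \<Longrightarrow> x \<in> D \<Longrightarrow> - x \<in> D"
  unfolding subring_C_def by (metis diff_0)

lemma subring_C_power: "subring_C D \<Longrightarrow> x \<in> D \<Longrightarrow> x ^ n \<in> D"
  unfolding subring_C_def by (induction n) auto

lemma det_in_D:
  assumes D: "subring_C D" and M: "M \<in> carrier_mat n n"
    and ent: "\<And>r c. r < n \<Longrightarrow> c < n \<Longrightarrow> M $$ (r,c) \<in> D"
  shows "det M \<in> D"
proof -
  have "det M = (\<Sum>p \<in> {p. p permutes {0..<n}}. signof p * (\<Prod>i = 0..<n. M $$ (i, p i)))"
    using det_def'[OF M] by simp
  also have "\<dots> \<in> D"
  proof (rule subring_C_sum[OF D])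
    fix p assume p: "p \<in> {p. p permutes {0..<n}}"
    have s: "signof p \<in> D"
      using D unfolding sign_def subring_C_def by (auto intro: subring_C_uminus[OF D])
    have "(\<Prod>i = 0..<n. M $$ (i, p i)) \<in> D"
    proof (rule subring_C_prod[OF D])
      fix i assume i: "i \<in> {0..<n}"
      hence "p i < n" using p permutes_in_image by fastforce
      thus "M $$ (i, p i) \<in> D" using i by (auto intro: ent)
    qed
    thus "signof p * (\<Prod>i = 0..<n. M $$ (i, p i)) \<in> D" using s D unfolding subring_C_def by blast
  qed
  finally show ?thesis .
qed

lemma cofactor_in_D:
  assumes D: "subring_C D" and M: "M \<in> carrier_mat n n"
    and ent: "\<And>r c. r < n \<Longrightarrow> c < n \<Longrightarrow> M $$ (r,c) \<in> D"
    and r: "r < n" and q: "q < n"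
  shows "cofactor M r q \<in> D"
proof -
  have "det (mat_delete M r q) \<in> D"
    using M r q by (intro det_in_D[OF D mat_delete_carrier[OF M]])
      (auto simp: mat_delete_def intro!: ent)
  moreover have "(-1::complex)^(r+q) \<in> D" using D
    by (intro subring_C_power subring_C_uminus) (auto simp: subring_C_def)
  ultimately show ?thesis unfolding cofactor_def using D unfolding subring_C_def by blast
qed

lemma mk_cong:
  assumes "\<And>r. r < n \<Longrightarrow> rs r = rs' r" and "\<And>c. c < n \<Longrightarrow> cs c = cs' c"
  shows "mk rs cs n = mk rs' cs' n"
  using assms by (intro eq_matI) auto

lemma mat_delete_mk:
  "mat_delete (mk rs cs (Suc n)) p q =
     mk (\<lambda>r. rs (if r < p then r else Suc r)) (\<lambda>c. cs (if c < q then c else Suc c)) n"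
  unfolding mat_delete_def mk_def by (intro eq_matI) auto

lemma col_mk_eq:
  assumes "c1 < n" "c2 < n" "cs c1 = cs c2"
  shows "col (mk rs cs n) c1 = col (mk rs cs n) c2"
  using assms by (intro eq_vecI) auto

lemma det_mk_identical_cols:
  assumes "c1 < n" "c2 < n" "c1 \<noteq> c2" "cs c1 = cs c2"
  shows "det (mk rs cs n) = 0"
  using det_identical_columns[OF mk_carrier assms(3,1,2) col_mk_eq[OF assms(1,2,4)]] .

definition pairU :: "nat \<Rightarrow> (nat \<Rightarrow> complex) \<Rightarrow> complex poly" where
  "pairU i y = (\<Sum>r<2*i. if r < i then monom (y r) r else 0)"
definition pairV :: "nat \<Rightarrow> (nat \<Rightarrow> complex) \<Rightarrow> complex poly" where
  "pairV i y = (\<Sum>r<2*i. if r < i then 0 else monom (y r) (r - i))"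

lemma coeff_pairU: "coeff (pairU i y) t = (if t < i then y t else 0)"
proof -
  have "coeff (pairU i y) t = (\<Sum>r<2*i. if r = t then (if t < i then y t else 0) else 0)"
    unfolding pairU_def coeff_sum by (intro sum.cong refl) (auto simp: coeff_monom)
  also have "\<dots> = (if t < i then y t else 0)"
    by (subst sum.delta) auto
  finally show ?thesis .
qed

lemma coeff_pairV: "coeff (pairV i y) t = (if t < i then y (i + t) else 0)"
proof -
  have "coeff (pairV i y) t = (\<Sum>r<2*i. if r = i + t then (if t < i then y (i + t) else 0) else 0)"
    unfolding pairV_def coeff_sum by (intro sum.cong refl) (auto simp: coeff_monom)
  also have "\<dots> = (if t < i then y (i + t) else 0)"
    by (subst sum.delta) auto
  finally show ?thesis .
qed

lemma degree_pairU: "degree (pairU i y) < i \<or> i = 0"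
proof (cases "i = 0")
  case False
  have "degree (pairU i y) \<le> i - 1"
    by (rule degree_le) (auto simp: coeff_pairU)
  thus ?thesis using False by auto
qed simp

lemma degree_pairV: "degree (pairV i y) < i \<or> i = 0"
proof (cases "i = 0")
  case False
  have "degree (pairV i y) \<le> i - 1"
    by (rule degree_le) (auto simp: coeff_pairV)
  thus ?thesis using False by auto
qed simp

lemma pair_comb:
  "pairU i y * A + pairV i y * B = (\<Sum>r<2*i. smult (y r) (rowp A B i r))"
proof -
  have "pairU i y * A + pairV i y * B =
    (\<Sum>r<2*i. (if r < i then monom (y r) r else 0) * A + (if r < i then 0 else monom (y r) (r - i)) * B)"
    unfolding pairU_def pairV_def by (simp add: sum_distrib_right sum.distrib)
  also have "\<dots> = (\<Sum>r<2*i. smult (y r) (rowp A B i r))"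
    by (intro sum.cong refl) (auto simp: rowp_def smult_monom[symmetric] monom_altdef mult_ac)
  finally show ?thesis .
qed

locale sres =
  fixes A B :: "complex poly" and d :: nat
  assumes dA: "degree A = d" and dB: "degree B = d"
begin

definition zc :: "nat \<Rightarrow> nat \<Rightarrow> complex" where
  "zc i r = cofactor (mk (rowp A B i) (colp d i (i - 1)) (2*i)) r (i - 1)"

lemma degree_row: "degree (rowp A B i r) \<le> d + r"
  unfolding rowp_def using dA dB
  by (auto intro!: order.trans[OF degree_mult_le] simp: degree_monom_eq)

lemma degree_row': "r < 2*i \<Longrightarrow> degree (rowp A B i r) \<le> d + i - 1"
  unfolding rowp_def using dA dB
  by (auto intro!: order.trans[OF degree_mult_le] simp: degree_monom_eq)

lemma zc_indep:
  assumes i: "1 \<le> i"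
  shows "cofactor (mk (rowp A B i) (colp d i q) (2*i)) r (i - 1) = zc i r"
  unfolding zc_def by (rule cofactor_cong[OF mk_carrier mk_carrier]) (auto simp: colp_def)

lemma comb_coeff:
  assumes i: "1 \<le> i"
  shows "(\<Sum>r<2*i. zc i r * coeff (rowp A B i r) c) = det (mk (rowp A B i) (colp d i c) (2*i))"
proof -
  let ?M = "mk (rowp A B i) (colp d i (i - 1)) (2*i)"
  have "mat (2*i) (2*i) (\<lambda>(r,c'). if c' = i - 1 then coeff (rowp A B i r) c else ?M $$ (r,c'))
     = mk (rowp A B i) (colp d i c) (2*i)"
    by (intro eq_matI) (auto simp: colp_def)
  moreover have "det (mat (2*i) (2*i) (\<lambda>(r,c'). if c' = i - 1 then coeff (rowp A B i r) c else ?M $$ (r,c')))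
     = (\<Sum>r<2*i. coeff (rowp A B i r) c * cofactor ?M r (i - 1))"
    by (rule det_replace_col) (use i in auto)
  ultimately show ?thesis unfolding zc_def by (simp add: mult.commute)
qed

lemma symsubres_coeff:
  assumes i: "1 \<le> i" and A0: "degree A = d"
  shows "coeff (symsubres A B (int i)) t = (if t \<le> d - i then det (Sylv A B d i t) else 0)"
proof -
  have "symsubres A B (int i) = (\<Sum>l = 0..d - i. monom (det (Sylv A B d i l)) l)"
    unfolding symsubres_def using i A0 by simp
  hence "coeff (symsubres A B (int i)) t = (\<Sum>l = 0..d - i. if l = t then det (Sylv A B d i l) else 0)"
    by (simp add: coeff_sum coeff_monom)
  thus ?thesis by (simp add: sum.delta)
qed

lemma degree_symsubres:
  assumes i: "1 \<le> i"
  shows "degree (symsubres A B (int i)) \<le> d - i"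
  by (rule degree_le) (use symsubres_coeff[OF i dA] in auto)

lemma combo:
  assumes i: "1 \<le> i" and id: "i \<le> d"
  shows "pairU i (zc i) * A + pairV i (zc i) * B = monom 1 (i - 1) * symsubres A B (int i)"
proof (rule poly_eqI)
  fix c
  have L: "coeff (pairU i (zc i) * A + pairV i (zc i) * B) c = det (mk (rowp A B i) (colp d i c) (2*i))"
    if "c < d + i"
    unfolding pair_comb coeff_sum comb_coeff[OF i, symmetric] by (simp add: mult.commute)
  have R: "coeff (monom 1 (i - 1) * symsubres A B (int i)) c =
     (if c < i - 1 then 0 else if c - (i - 1) \<le> d - i then det (Sylv A B d i (c - (i - 1))) else 0)"
    by (simp add: coeff_monom_mult symsubres_coeff[OF i dA])
  consider (lo) "c < i - 1" | (mid) "i - 1 \<le> c" "c < d" | (hi) "d \<le> c" "c < d + i" | (top) "d + i \<le> c"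
    by linarith
  then show "coeff (pairU i (zc i) * A + pairV i (zc i) * B) c = coeff (monom 1 (i - 1) * symsubres A B (int i)) c"
  proof cases
    case lo
    have "det (mk (rowp A B i) (colp d i c) (2*i)) = 0"
      by (rule det_mk_identical_cols[of c _ "i - 1"]) (use lo i in \<open>auto simp: colp_def\<close>)
    thus ?thesis using L R lo id by simp
  next
    case mid
    have "Sylv A B d i (c - (i - 1)) = mk (rowp A B i) (colp d i c) (2*i)"
      using Sylv_mk[OF dA dB i, of "c - (i - 1)"] mid by simp
    thus ?thesis using L R mid id by simp
  next
    case hi
    have "det (mk (rowp A B i) (colp d i c) (2*i)) = 0"
      by (rule det_mk_identical_cols[of "i + (c - d)" _ "i - 1"]) (use hi i in \<open>auto simp: colp_def\<close>)
    thus ?thesis using L R hi id by simp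
  next
    case top
    have "coeff (pairU i (zc i) * A + pairV i (zc i) * B) c = (\<Sum>r<2*i. zc i r * coeff (rowp A B i r) c)"
      unfolding pair_comb coeff_sum by simp
    also have "\<dots> = 0"
    proof (intro sum.neutral ballI)
      fix r assume "r \<in> {..<2*i}"
      hence "degree (rowp A B i r) < c" using degree_row'[of r i] top i by auto
      thus "zc i r * coeff (rowp A B i r) c = 0" by (simp add: coeff_eq_0)
    qed
    finally have "coeff (pairU i (zc i) * A + pairV i (zc i) * B) c = 0" .
    moreover have "coeff (monom 1 (i - 1) * symsubres A B (int i)) c = 0"
      unfolding R using top i id by auto
    ultimately show ?thesis by simp
  qed
qed

end

context sres begin

lemma last_cofactor:
  assumes i: "2 \<le> i"
  shows "\<exists>e. zc i (2*i - 1) = (-1)^e * lead_coeff A * det (Sylv A B d (i - 1) 0)"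
proof -
  define n where "n = 2*i - 1"
  have n2: "2*i = Suc n" and ni: "n = 2*i - 1" using i unfolding n_def by auto
  define cs' where "cs' = (\<lambda>c. colp d i (i - 1) (if c < i - 1 then c else Suc c))"
  let ?M = "mk (rowp A B i) (colp d i (i - 1)) (Suc n)"
  let ?N = "mk (rowp A B i) cs' n"
  have del: "mat_delete ?M n (i - 1) = ?N"
    unfolding mat_delete_mk cs'_def by (rule mk_cong) auto
  have z: "zc i (2*i - 1) = (-1)^(n + (i - 1)) * det ?N"
    unfolding zc_def n2 cofactor_def del[symmetric] using ni n2 by simp
  have nn: "n - 1 < n" using i ni by auto
  have csn: "cs' (n - 1) = d + i - 1" using i ni unfolding cs'_def colp_def by auto
  have ent: "coeff (rowp A B i r) (d + i - 1) = (if r = i - 1 then lead_coeff A else 0)"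
    if r: "r < n" for r
  proof (cases "r < i")
    case True
    hence "coeff (rowp A B i r) (d + i - 1) = coeff A (d + i - 1 - r)"
      unfolding rowp_def using i by (simp add: coeff_monom_mult)
    moreover have "r \<noteq> i - 1 \<Longrightarrow> coeff A (d + i - 1 - r) = 0"
      using True dA by (intro coeff_eq_0) auto
    moreover have "r = i - 1 \<Longrightarrow> d + i - 1 - r = degree A" using dA i by auto
    ultimately show ?thesis by auto
  next
    case False
    hence "coeff (rowp A B i r) (d + i - 1) = coeff B (d + i - 1 - (r - i))"
      unfolding rowp_def using i r ni by (simp add: coeff_monom_mult)
    moreover have "coeff B (d + i - 1 - (r - i)) = 0"
      using False dB r ni by (intro coeff_eq_0) auto
    ultimately show ?thesis using False i by auto
  qed
  have "det ?N = (\<Sum>r<n. ?N $$ (r, n - 1) * cofactor ?N r (n - 1))"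
    by (rule laplace_expansion_column[OF mk_carrier nn])
  also have "\<dots> = (\<Sum>r<n. if r = i - 1 then lead_coeff A * cofactor ?N (i - 1) (n - 1) else 0)"
  proof (intro sum.cong refl)
    fix r assume "r \<in> {..<n}"
    hence r: "r < n" by simp
    have "?N $$ (r, n - 1) = coeff (rowp A B i r) (d + i - 1)" using nn r csn by simp
    thus "?N $$ (r, n - 1) * cofactor ?N r (n - 1) =
      (if r = i - 1 then lead_coeff A * cofactor ?N (i - 1) (n - 1) else 0)"
      using ent[OF r] by auto
  qed
  also have "\<dots> = lead_coeff A * cofactor ?N (i - 1) (n - 1)"
    using i ni by (subst sum.delta) auto
  finally have dN: "det ?N = lead_coeff A * cofactor ?N (i - 1) (n - 1)" .
  have n1: "n = Suc (n - 1)" using ni i by auto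
  have "mat_delete ?N (i - 1) (n - 1) = Sylv A B d (i - 1) 0"
  proof -
    have "mat_delete ?N (i - 1) (n - 1) = mat_delete (mk (rowp A B i) cs' (Suc (n - 1))) (i - 1) (n - 1)"
      using n1 by simp
    also have "\<dots> = mk (\<lambda>r. rowp A B i (if r < i - 1 then r else Suc r))
                        (\<lambda>c. cs' (if c < n - 1 then c else Suc c)) (n - 1)"
      by (rule mat_delete_mk)
    also have "\<dots> = mk (rowp A B (i - 1)) (colp d (i - 1) (i - 1 - 1 + 0)) (n - 1)"
    proof (rule mk_cong)
      fix r assume r: "r < n - 1"
      show "rowp A B i (if r < i - 1 then r else Suc r) = rowp A B (i - 1) r"
        unfolding rowp_def using i by auto
    next
      fix c assume c: "c < n - 1"
      show "cs' (if c < n - 1 then c else Suc c) = colp d (i - 1) (i - 1 - 1 + 0) c"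
        unfolding cs'_def colp_def using c i ni by auto
    qed
    also have "\<dots> = Sylv A B d (i - 1) 0"
      using Sylv_mk[OF dA dB, of "i - 1" 0] i ni by (simp add: mult_2)
    finally show ?thesis .
  qed
  hence "cofactor ?N (i - 1) (n - 1) = (-1)^((i - 1) + (n - 1)) * det (Sylv A B d (i - 1) 0)"
    unfolding cofactor_def by simp
  hence "zc i (2*i - 1) = (-1)^(n + (i - 1)) * ((-1)^((i - 1) + (n - 1)) * (lead_coeff A * det (Sylv A B d (i - 1) 0)))"
    using z dN by simp
  hence "zc i (2*i - 1) = (-1)^(n + (i - 1) + ((i - 1) + (n - 1))) * lead_coeff A * det (Sylv A B d (i - 1) 0)"
    by (simp add: power_add mult_ac)
  thus ?thesis by blast
qed

lemma kernel_level:
  assumes k: "1 \<le> k" and d0: "det (Sylv A B d k 0) = 0"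
  shows "\<exists>U V. (U \<noteq> 0 \<or> V \<noteq> 0) \<and> degree U < k \<and> degree V < k \<and>
     (\<forall>c. (c < k \<or> (d \<le> c \<and> c < d + k)) \<longrightarrow> coeff (U * A + V * B) c = 0)"
proof -
  let ?M = "mk (rowp A B k) (colp d k (k - 1)) (2*k)"
  have "det ?M = 0" using d0 Sylv_mk[OF dA dB k, of 0] by simp
  then obtain y where y: "\<exists>r<2*k. y r \<noteq> 0" "\<And>c. c < 2*k \<Longrightarrow> (\<Sum>r<2*k. y r * ?M $$ (r,c)) = 0"
    using det_zero_left_kernel[OF mk_carrier] by blast
  have cf: "coeff (pairU k y * A + pairV k y * B) (colp d k (k - 1) c) = 0" if c: "c < 2*k" for c
  proof -
    have "coeff (pairU k y * A + pairV k y * B) (colp d k (k - 1) c) = (\<Sum>r<2*k. y r * ?M $$ (r,c))"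
      unfolding pair_comb coeff_sum using c by simp
    thus ?thesis using y(2)[OF c] by simp
  qed
  have "(\<forall>c. (c < k \<or> (d \<le> c \<and> c < d + k)) \<longrightarrow> coeff (pairU k y * A + pairV k y * B) c = 0)"
  proof (intro allI impI)
    fix c assume "c < k \<or> (d \<le> c \<and> c < d + k)"
    then consider "c < k" | "d \<le> c" "c < d + k" by blast
    then show "coeff (pairU k y * A + pairV k y * B) c = 0"
    proof cases
      case 1
      have "colp d k (k - 1) c = c" using 1 unfolding colp_def by auto
      thus ?thesis using cf[of c] 1 by simp
    next
      case 2
      have "colp d k (k - 1) (k + (c - d)) = c" using 2 k unfolding colp_def by auto
      thus ?thesis using cf[of "k + (c - d)"] 2 by simp
    qed
  qed
  moreover have "pairU k y \<noteq> 0 \<or> pairV k y \<noteq> 0"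
  proof -
    obtain r where r: "r < 2*k" "y r \<noteq> 0" using y(1) by blast
    show ?thesis
    proof (cases "r < k")
      case True
      hence "coeff (pairU k y) r \<noteq> 0" using r by (simp add: coeff_pairU)
      thus ?thesis by auto
    next
      case False
      hence "coeff (pairV k y) (r - k) \<noteq> 0" using r by (simp add: coeff_pairV)
      thus ?thesis by auto
    qed
  qed
  moreover have "degree (pairU k y) < k" "degree (pairV k y) < k"
    using degree_pairU[of k y] degree_pairV[of k y] k by auto
  ultimately show ?thesis by blast
qed

lemma proportional_level:
  assumes i: "1 \<le> i"
    and y: "\<And>c. c < 2*i \<Longrightarrow> c \<noteq> i - 1 \<Longrightarrow>
             (\<Sum>r<2*i. y r * coeff (rowp A B i r) (colp d i (i - 1) c)) = 0"
    and r': "r' < 2*i"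
  shows "zc i (2*i - 1) * y r' = y (2*i - 1) * zc i r'"
proof -
  let ?M = "mk (rowp A B i) (colp d i (i - 1)) (2*i)"
  let ?M' = "mat (2*i) (2*i) (\<lambda>(r,c). if c = i - 1 then (if r = 2*i - 1 then 1 else 0) else ?M $$ (r,c))"
  have q: "i - 1 < 2*i" using i by auto
  have M': "?M' \<in> carrier_mat (2*i) (2*i)" by simp
  have cof: "cofactor ?M' r (i - 1) = zc i r" for r
    unfolding zc_def by (rule cofactor_cong[OF M' mk_carrier]) auto
  have "det ?M' * y r' = (\<Sum>r<2*i. y r * ?M' $$ (r, i - 1)) * cofactor ?M' r' (i - 1)"
  proof (rule cofactor_proportional[OF M' q _ r'])
    fix c assume c: "c < 2*i" "c \<noteq> i - 1"
    have "(\<Sum>r<2*i. y r * ?M' $$ (r,c)) = (\<Sum>r<2*i. y r * coeff (rowp A B i r) (colp d i (i - 1) c))"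
      using c by (intro sum.cong refl) auto
    thus "(\<Sum>r<2*i. y r * ?M' $$ (r,c)) = 0" using y c by simp
  qed
  also have "(\<Sum>r<2*i. y r * ?M' $$ (r, i - 1)) = y (2*i - 1)"
  proof -
    have "(\<Sum>r<2*i. y r * ?M' $$ (r, i - 1)) = (\<Sum>r<2*i. if r = 2*i - 1 then y r else 0)"
      using q by (intro sum.cong refl) auto
    also have "\<dots> = y (2*i - 1)" using i by (subst sum.delta) auto
    finally show ?thesis .
  qed
  also have "det ?M' = zc i (2*i - 1)"
  proof -
    have "det ?M' = (\<Sum>r<2*i. (if r = 2*i - 1 then 1 else 0) * cofactor ?M r (i - 1))"
      by (rule det_replace_col[OF mk_carrier q])
    also have "\<dots> = cofactor ?M (2*i - 1) (i - 1)"
    proof -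
      have "(\<Sum>r<2*i. (if r = 2*i - 1 then 1 else 0) * cofactor ?M r (i - 1))
          = (\<Sum>r<2*i. if r = 2*i - 1 then cofactor ?M r (i - 1) else 0)"
        by (intro sum.cong refl) auto
      also have "\<dots> = cofactor ?M (2*i - 1) (i - 1)" using i by (subst sum.delta) auto
      finally show ?thesis .
    qed
    finally show ?thesis unfolding zc_def .
  qed
  finally show ?thesis unfolding cof .
qed

end

lemma monom_dvd_degree:
  assumes "monom 1 a dvd (p :: 'a :: field poly)" "p \<noteq> 0"
  shows "a \<le> degree p"
proof (rule ccontr)
  assume "\<not> a \<le> degree p"
  moreover have "\<forall>k<a. coeff p k = 0" using assms(1) monom_1_dvd_iff' by blast
  ultimately have "coeff p (degree p) = 0" by simp
  thus False using assms(2) by simp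
qed

lemma monom_dvd_mult_cancel:
  assumes "monom 1 n dvd (p * q :: 'a :: field poly)" "coeff q 0 \<noteq> 0"
  shows "monom 1 n dvd p"
proof -
  have "coeff p i = 0" if "i < n" for i
    using that
  proof (induction i rule: less_induct)
    case (less i)
    have "coeff (p * q) i = 0" using assms(1) less.prems monom_1_dvd_iff' by blast
    moreover have "coeff (p * q) i = (\<Sum>t\<le>i. coeff p t * coeff q (i - t))" by (rule coeff_mult)
    moreover have "(\<Sum>t\<le>i. coeff p t * coeff q (i - t)) = coeff p i * coeff q 0"
    proof -
      have "(\<Sum>t\<le>i. coeff p t * coeff q (i - t)) = (\<Sum>t\<le>i. if t = i then coeff p i * coeff q 0 else 0)"
        using less.IH less.prems by (intro sum.cong refl) auto
      thus ?thesis by simp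
    qed
    ultimately show ?case using assms(2) by simp
  qed
  thus ?thesis using monom_1_dvd_iff' by blast
qed

lemma monom_dvd_mult:
  assumes "monom 1 a dvd (p :: 'a :: field poly)" "monom 1 b dvd q"
  shows "monom 1 (a + b) dvd p * q"
proof -
  have "monom 1 a * monom 1 b dvd p * q" using assms by (rule mult_dvd_mono)
  thus ?thesis by (simp add: mult_monom)
qed

lemma monom_dvd_le:
  assumes "monom 1 a dvd (p :: 'a :: field poly)" "b \<le> a"
  shows "monom 1 b dvd p"
  using assms monom_1_dvd_iff' by (metis order.strict_trans2)

lemma monom_dvd_shift_cancel:
  assumes "monom 1 (a + b) dvd (monom 1 a * p :: 'a :: field poly)"
  shows "monom 1 b dvd p"
proof -
  have "monom 1 a * monom 1 b dvd monom 1 a * p" using assms by (simp add: mult_monom)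
  thus ?thesis by (subst (asm) dvd_mult_cancel_left) auto
qed

lemma coeff_mult_le:
  assumes "degree p \<le> a" "degree q \<le> b"
  shows "coeff (p * q) (a + b) = coeff p a * coeff q b"
proof -
  have "coeff (p * q) (a + b) = (\<Sum>t\<le>a + b. coeff p t * coeff q (a + b - t))" by (rule coeff_mult)
  also have "\<dots> = (\<Sum>t\<le>a + b. if t = a then coeff p a * coeff q b else 0)"
  proof (intro sum.cong refl)
    fix t assume "t \<in> {..a + b}"
    show "coeff p t * coeff q (a + b - t) = (if t = a then coeff p a * coeff q b else 0)"
    proof (cases "t = a")
      case False
      show ?thesis
      proof (cases "t < a")
        case True
        hence "coeff q (a + b - t) = 0" using assms(2) by (intro coeff_eq_0) auto
        thus ?thesis using False by simp
      next
        case False2: False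
        hence "coeff p t = 0" using assms(1) False by (intro coeff_eq_0) auto
        thus ?thesis using False by simp
      qed
    qed simp
  qed
  also have "\<dots> = coeff p a * coeff q b" by simp
  finally show ?thesis .
qed

lemma coeff_monom_mult_shift: "coeff (monom 1 a * (p :: complex poly)) (t + a) = coeff p t"
  by (simp add: coeff_monom_mult)

lemma degree_monom_mult_le: "degree (monom 1 a * (p :: 'a :: field poly)) \<le> a + degree p"
  by (metis degree_monom_le degree_mult_le add_le_mono order_trans order_refl)

lemma sdiv_exists_unique:
  fixes P T :: "complex poly"
  assumes P: "P \<noteq> 0" and T0: "coeff T 0 \<noteq> 0" and dP: "degree P = degree T + a + b"
  shows "\<exists>!QR. degree (fst QR) = a + b \<and> (snd QR = 0 \<or> degree (snd QR) < degree T)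
                \<and> P = fst QR * T + monom 1 b * snd QR"
proof -
  have T: "T \<noteq> 0" using T0 by auto
  have step1: "\<exists>Q1. monom 1 n dvd (P - Q1 * T)" for n
  proof (induction n)
    case 0
    show ?case by (intro exI[of _ 0]) simp
  next
    case (Suc n)
    then obtain Q1 where Q1: "monom 1 n dvd (P - Q1 * T)" by blast
    define e where "e = coeff (P - Q1 * T) n / coeff T 0"
    define Q1' where "Q1' = Q1 + monom e n"
    have eq: "P - Q1' * T = (P - Q1 * T) - monom e n * T" unfolding Q1'_def by (simp add: algebra_simps)
    have "coeff (P - Q1' * T) i = 0" if "i < Suc n" for i
    proof (cases "i < n")
      case True
      have "coeff (P - Q1 * T) i = 0" using Q1 True monom_1_dvd_iff' by blast
      moreover have "coeff (monom e n * T) i = 0" using True by (simp add: coeff_monom_mult)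
      ultimately show ?thesis unfolding eq coeff_diff by simp
    next
      case False
      hence "i = n" using that by simp
      thus ?thesis unfolding eq using T0 by (simp add: coeff_monom_mult e_def)
    qed
    thus ?case using monom_1_dvd_iff' by blast
  qed
  obtain Q1 where Q1: "monom 1 b dvd (P - Q1 * T)" using step1 by blast
  then obtain H where H: "P - Q1 * T = monom 1 b * H" by (elim dvdE)
  define Q2 where "Q2 = H div T"
  define R where "R = H mod T"
  have HQR: "H = Q2 * T + R" unfolding Q2_def R_def by simp
  have R: "R = 0 \<or> degree R < degree T" unfolding R_def using degree_mod_less[OF T] by blast
  define Q where "Q = Q1 + monom 1 b * Q2"
  have PQ: "P = Q * T + monom 1 b * R"
  proof -
    have "P = Q1 * T + monom 1 b * H" using H by (simp add: algebra_simps)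
    thus ?thesis unfolding Q_def HQR by (simp add: algebra_simps)
  qed
  have degQ: "degree Q = a + b" if "P = Q * T + monom 1 b * R" "R = 0 \<or> degree R < degree T" for Q R
  proof -
    have QT: "Q * T = P + (- (monom 1 b * R))" using that(1) by simp
    have dQT: "degree (Q * T) = degree P"
    proof (cases "R = 0")
      case False
      hence "degree (monom 1 b * R) = b + degree R" by (simp add: degree_mult_eq degree_monom_eq)
      hence "degree (- (monom 1 b * R)) < degree P" using that(2) False dP by auto
      thus ?thesis unfolding QT by (rule degree_add_eq_left)
    qed (use QT in simp)
    have "Q \<noteq> 0"
    proof
      assume Q0: "Q = 0"
      hence PR: "P = monom 1 b * R" using that(1) by simp
      show False
      proof (cases "R = 0")
        case False
        hence "degree P = b + degree R" unfolding PR by (simp add: degree_mult_eq degree_monom_eq)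
        thus False using that(2) False dP by auto
      qed (use PR P in simp)
    qed
    hence "degree Q + degree T = degree P" using T dQT by (simp add: degree_mult_eq)
    thus ?thesis using dP by simp
  qed
  show ?thesis
  proof (rule ex1I[of _ "(Q, R)"])
    show "degree (fst (Q, R)) = a + b \<and> (snd (Q, R) = 0 \<or> degree (snd (Q, R)) < degree T)
          \<and> P = fst (Q, R) * T + monom 1 b * snd (Q, R)"
      using PQ R degQ[OF PQ R] by simp
  next
    fix QR' assume h: "degree (fst QR') = a + b \<and> (snd QR' = 0 \<or> degree (snd QR') < degree T)
          \<and> P = fst QR' * T + monom 1 b * snd QR'"
    obtain Q' R' where QR': "QR' = (Q', R')" by (cases QR')
    have R': "R' = 0 \<or> degree R' < degree T" and PQ': "P = Q' * T + monom 1 b * R'"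
      using h QR' by auto
    have eq: "(Q - Q') * T = monom 1 b * (R' - R)" using PQ PQ' by (simp add: algebra_simps)
    hence "monom 1 b dvd (Q - Q') * T" by simp
    hence "monom 1 b dvd (Q - Q')" using monom_dvd_mult_cancel T0 by blast
    then obtain G where G: "Q - Q' = monom 1 b * G" by (elim dvdE)
    have "monom 1 b * (G * T) = monom 1 b * (R' - R)" using eq G by (simp add: mult_ac)
    hence GT: "G * T = R' - R" by (simp add: mult_left_cancel monom_eq_0_iff)
    have "G = 0"
    proof (rule ccontr)
      assume G0: "G \<noteq> 0"
      hence "degree (G * T) \<ge> degree T" using T by (simp add: degree_mult_eq)
      moreover have "R' - R \<noteq> 0" using GT G0 T by auto
      moreover have "degree (R' - R) < degree T"
      proof -
        have "degree (R' - R) \<le> max (degree R') (degree R)" by (rule degree_diff_le_max)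
        moreover have "R' - R \<noteq> 0" using GT G0 T by auto
        ultimately show ?thesis using R R' by auto
      qed
      ultimately show False using GT by simp
    qed
    hence "Q' = Q" "R' = R" using G GT by auto
    thus "QR' = (Q, R)" using QR' by simp
  qed
qed

lemma x_pow_monom: "([:0, 1:] :: 'a :: comm_ring_1 poly) ^ n = monom 1 n"
  by (simp add: monom_altdef)

lemma sdiv_rel_iff:
  fixes P T :: "complex poly"
  assumes T0: "coeff T 0 \<noteq> 0" and dP: "degree P = degree T + a + b"
  shows "sdiv_rel P (monom 1 a * T) Q R \<longleftrightarrow>
     (degree Q = a + b \<and> (R = 0 \<or> degree R < degree T) \<and> P = Q * T + monom 1 b * R)"
proof -
  have T: "T \<noteq> 0" using T0 by auto
  have v: "val (monom 1 a * T) = a"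
    unfolding val_def using T T0
    by (subst order_mult) (auto simp: order_0_monom poly_0_coeff_0 intro!: order_0I)
  have dP1: "degree (monom 1 a * T) = a + degree T" using T by (simp add: degree_mult_eq degree_monom_eq)
  have dv: "monom 1 a * T div [:0, 1:] ^ a = T" unfolding x_pow_monom by simp
  show ?thesis unfolding sdiv_rel_def Let_def v dP1 dv x_pow_monom using dP by auto
qed

lemma squo_srem:
  fixes P T :: "complex poly"
  assumes P: "P \<noteq> 0" and T0: "coeff T 0 \<noteq> 0" and dP: "degree P = degree T + a + b"
  shows "degree (squo P (monom 1 a * T)) = a + b \<and>
         (srem P (monom 1 a * T) = 0 \<or> degree (srem P (monom 1 a * T)) < degree T) \<and>
         P = squo P (monom 1 a * T) * T + monom 1 b * srem P (monom 1 a * T)"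
proof -
  let ?f = "\<lambda>QR. case QR of (Q, R) \<Rightarrow> sdiv_rel P (monom 1 a * T) Q R"
  have f: "?f QR \<longleftrightarrow> degree (fst QR) = a + b \<and> (snd QR = 0 \<or> degree (snd QR) < degree T)
                \<and> P = fst QR * T + monom 1 b * snd QR" for QR
    using sdiv_rel_iff[OF T0 dP] by (cases QR) auto
  have "\<exists>!QR. ?f QR" unfolding f using sdiv_exists_unique[OF P T0 dP] .
  hence "?f (THE QR. ?f QR)" by (rule theI')
  hence "?f (squo P (monom 1 a * T), srem P (monom 1 a * T))"
    unfolding squo_def srem_def by simp
  thus ?thesis unfolding f by simp
qed

lemma squo_srem_zero:
  fixes S1 :: "complex poly"
  assumes S1: "S1 \<noteq> 0" and v: "val S1 = 0"
  shows "squo 0 S1 = 0 \<and> srem 0 S1 = 0"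
proof -
  have iff: "sdiv_rel 0 S1 Q R \<longleftrightarrow> Q = 0 \<and> R = 0" for Q R
    unfolding sdiv_rel_def Let_def v using S1 by auto
  let ?f = "\<lambda>QR. case QR of (Q, R) \<Rightarrow> sdiv_rel 0 S1 Q R"
  have "\<exists>!QR. ?f QR" using iff by (intro ex1I[of _ "(0,0)"]) auto
  hence "?f (THE QR. ?f QR)" by (rule theI')
  hence "?f (squo 0 S1, srem 0 S1)" unfolding squo_def srem_def by simp
  thus ?thesis using iff by simp
qed

lemma in_Dpoly_0: "subring_C D \<Longrightarrow> in_Dpoly D 0"
  unfolding in_Dpoly_def subring_C_def by simp

lemma in_Dpoly_add: "subring_C D \<Longrightarrow> in_Dpoly D p \<Longrightarrow> in_Dpoly D q \<Longrightarrow> in_Dpoly D (p + q)"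
  unfolding in_Dpoly_def subring_C_def by simp

lemma in_Dpoly_diff: "subring_C D \<Longrightarrow> in_Dpoly D p \<Longrightarrow> in_Dpoly D q \<Longrightarrow> in_Dpoly D (p - q)"
  unfolding in_Dpoly_def subring_C_def by simp

lemma in_Dpoly_smult: "subring_C D \<Longrightarrow> c \<in> D \<Longrightarrow> in_Dpoly D p \<Longrightarrow> in_Dpoly D (smult c p)"
  unfolding in_Dpoly_def subring_C_def by simp

lemma in_Dpoly_mult: "subring_C D \<Longrightarrow> in_Dpoly D p \<Longrightarrow> in_Dpoly D q \<Longrightarrow> in_Dpoly D (p * q)"
  unfolding in_Dpoly_def coeff_mult
  by (auto intro!: subring_C_sum simp: subring_C_def)

lemma in_Dpoly_monom: "subring_C D \<Longrightarrow> c \<in> D \<Longrightarrow> in_Dpoly D (monom c n)"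
  unfolding in_Dpoly_def subring_C_def by (simp add: coeff_monom)

context sres begin

lemma rowp_in_D: "subring_C D \<Longrightarrow> in_Dpoly D A \<Longrightarrow> in_Dpoly D B \<Longrightarrow> in_Dpoly D (rowp A B i r)"
  unfolding rowp_def
  by (auto intro!: in_Dpoly_mult in_Dpoly_monom simp: subring_C_def)

lemma Sylv_in_D:
  assumes D: "subring_C D" "in_Dpoly D A" "in_Dpoly D B" and i: "1 \<le> i"
  shows "det (Sylv A B d i l) \<in> D"
  unfolding Sylv_mk[OF dA dB i]
  by (rule det_in_D[OF D(1) mk_carrier]) (use rowp_in_D[OF D] in \<open>auto simp: in_Dpoly_def\<close>)

lemma symsubres_in_D:
  assumes D: "subring_C D" "in_Dpoly D A" "in_Dpoly D B" and i: "1 \<le> i"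
  shows "in_Dpoly D (symsubres A B (int i))"
  unfolding in_Dpoly_def symsubres_coeff[OF i dA]
  using Sylv_in_D[OF D i] D(1) by (auto simp: subring_C_def)

lemma zc_in_D:
  assumes D: "subring_C D" "in_Dpoly D A" "in_Dpoly D B" and i: "1 \<le> i" and r: "r < 2*i"
  shows "zc i r \<in> D"
  unfolding zc_def
  by (rule cofactor_in_D[OF D(1) mk_carrier]) (use rowp_in_D[OF D] r i in \<open>auto simp: in_Dpoly_def\<close>)

lemma pair_in_D:
  assumes D: "subring_C D" "in_Dpoly D A" "in_Dpoly D B" and i: "1 \<le> i"
  shows "in_Dpoly D (pairU i (zc i))" "in_Dpoly D (pairV i (zc i))"
  unfolding in_Dpoly_def coeff_pairU coeff_pairV
  using zc_in_D[OF D i] D(1) by (auto simp: subring_C_def)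

end


context sres begin

lemma main_case:
  fixes D :: "complex set" and j \<alpha> \<beta> :: nat
  assumes D: "subring_C D" "in_Dpoly D A" "in_Dpoly D B"
    and j1: "1 \<le> j" and jd: "j < d" and A0: "coeff A 0 \<noteq> 0"
    and S0_def: "S0 = symsubres A B (int j)"
    and S1_def: "S1 = symsubres A B (int (j + 1))"
    and k_def: "k = j + \<alpha> + \<beta>"
    and Sk_def: "Sk = symsubres A B (int k)"
    and dS0: "degree S0 = d - j" and S00: "coeff S0 0 \<noteq> 0"
    and S1: "S1 \<noteq> 0" and vS1: "val S1 = \<alpha>" and dS1: "degree S1 = d - j - \<beta>"
    and b1: "1 \<le> \<beta>" and bd: "\<beta> \<le> d - j"
  shows "in_Dpoly D (squo (smult (lead_coeff S1 * poly Sk 0) S0) S1) \<and>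
         in_Dpoly D (srem (smult (lead_coeff S1 * poly Sk 0) S0) S1)"
proof -
  have A: "A \<noteq> 0" using jd dA by auto
  have lcA: "lead_coeff A \<noteq> 0" using A by simp
  have S0: "S0 \<noteq> 0" using dS0 jd by auto
  have lcS0: "lead_coeff S0 \<noteq> 0" using S0 by simp
  have a_le: "\<alpha> \<le> d - j - \<beta>" using order_degree[OF S1, of 0] vS1 dS1 unfolding val_def by simp
  have kd: "k \<le> d" and k2: "2 \<le> k" and k1: "1 \<le> k" using a_le bd j1 b1 unfolding k_def by auto
  define m where "m = d - k"
  have dvdS1: "monom 1 \<alpha> dvd S1" using monom_1_dvd_iff[OF S1] vS1 unfolding val_def by simp
  define T where "T = S1 div monom 1 \<alpha>"
  have S1T: "S1 = monom 1 \<alpha> * T" unfolding T_def using dvdS1 by simp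
  have T0: "coeff T 0 \<noteq> 0"
  proof
    assume "coeff T 0 = 0"
    hence "monom 1 1 dvd T" using monom_1_dvd_iff' by auto
    hence "monom 1 \<alpha> * monom 1 1 dvd S1" unfolding S1T by simp
    hence "monom 1 (\<alpha> + 1) dvd S1" by (simp add: mult_monom)
    thus False using monom_1_dvd_iff[OF S1] vS1 unfolding val_def by simp
  qed
  have T: "T \<noteq> 0" using T0 by auto
  have degT: "degree T = m"
  proof -
    have dm: "degree (monom (1::complex) \<alpha>) = \<alpha>" by (rule degree_monom_eq) simp
    have m0: "monom (1::complex) \<alpha> \<noteq> 0" by simp
    have "degree S1 = degree (monom (1::complex) \<alpha>) + degree T" unfolding S1T
      by (rule degree_mult_eq[OF m0 T])
    hence "degree S1 = \<alpha> + degree T" unfolding dm .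
    thus ?thesis using dS1 unfolding m_def k_def by simp
  qed
  have lcS1: "lead_coeff S1 = lead_coeff T" unfolding S1T lead_coeff_mult lead_coeff_monom by simp
  define s where "s = det (Sylv A B d k 0)"
  have pSk: "poly Sk 0 = s" unfolding Sk_def s_def poly_0_coeff_0 symsubres_coeff[OF k1 dA] by simp
  define Uj where "Uj = pairU j (zc j)"
  define Vj where "Vj = pairV j (zc j)"
  define U1 where "U1 = pairU (j + 1) (zc (j + 1))"
  define V1 where "V1 = pairV (j + 1) (zc (j + 1))"
  have E: "Uj * A + Vj * B = monom 1 (j - 1) * S0"
    unfolding Uj_def Vj_def S0_def by (rule combo) (use j1 jd in auto)
  have F: "U1 * A + V1 * B = monom 1 j * S1"
    unfolding U1_def V1_def S1_def using combo[of "j + 1"] jd by simp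
  have dUj: "degree Uj \<le> j - 1" and dVj: "degree Vj \<le> j - 1"
    using degree_pairU[of j "zc j"] degree_pairV[of j "zc j"] j1 unfolding Uj_def Vj_def by auto
  have dU1: "degree U1 \<le> j" and dV1: "degree V1 \<le> j"
    using degree_pairU[of "j + 1" "zc (j + 1)"] degree_pairV[of "j + 1" "zc (j + 1)"]
    unfolding U1_def V1_def by auto
  define v1 where "v1 = coeff V1 j"
  have v1: "v1 \<noteq> 0"
  proof -
    have "v1 = zc (j + 1) (2 * (j + 1) - 1)" unfolding v1_def V1_def coeff_pairV by (simp add: mult_2)
    moreover obtain e where "zc (j + 1) (2 * (j + 1) - 1) = (-1)^e * lead_coeff A * det (Sylv A B d j 0)"
      using last_cofactor[of "j + 1"] j1 by auto
    moreover have "det (Sylv A B d j 0) = coeff S0 0"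
      unfolding S0_def symsubres_coeff[OF j1 dA] by simp
    ultimately show ?thesis using lcA S00 by simp
  qed
  define \<Delta> where "\<Delta> = Uj * V1 - Vj * U1"
  have DA: "\<Delta> * A = (monom 1 (j - 1) * S0) * V1 - (monom 1 j * S1) * Vj"
    unfolding E[symmetric] F[symmetric] \<Delta>_def by (simp add: algebra_simps)
  have dE: "degree (monom 1 (j - 1) * S0) \<le> d - 1"
    using degree_monom_mult_le[of "j - 1" S0] dS0 j1 jd by simp
  have dF: "degree (monom 1 j * S1) \<le> d - \<beta>"
    using degree_monom_mult_le[of j S1] dS1 bd jd by simp
  have dvdD: "monom 1 (j - 1) dvd \<Delta>"
  proof -
    have "monom 1 (j - 1) dvd (monom 1 (j - 1) * S0) * V1" by simp
    moreover have "monom 1 (j - 1) dvd (monom 1 j * S1) * Vj"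
      by (rule dvd_mult2, rule monom_dvd_le[of j]) auto
    ultimately have "monom 1 (j - 1) dvd \<Delta> * A" unfolding DA by (rule dvd_diff)
    thus ?thesis using monom_dvd_mult_cancel A0 by blast
  qed
  have dDA: "degree (\<Delta> * A) \<le> d + j - 1"
  proof -
    have "degree ((monom 1 (j - 1) * S0) * V1) \<le> d - 1 + j"
      by (rule order_trans[OF degree_mult_le add_mono[OF dE dV1]])
    moreover have "degree ((monom 1 j * S1) * Vj) \<le> d - \<beta> + (j - 1)"
      by (rule order_trans[OF degree_mult_le add_mono[OF dF dVj]])
    ultimately show ?thesis unfolding DA using degree_diff_le_max[of "(monom 1 (j - 1) * S0) * V1" "(monom 1 j * S1) * Vj"]
      b1 jd j1 by auto
  qed
  have dD: "degree \<Delta> \<le> j - 1"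
  proof (cases "\<Delta> = 0")
    case False
    hence "degree (\<Delta> * A) = degree \<Delta> + d" using A dA by (simp add: degree_mult_eq)
    thus ?thesis using dDA by simp
  qed simp
  define \<delta> where "\<delta> = coeff \<Delta> (j - 1)"
  have Dmon: "\<Delta> = smult \<delta> (monom 1 (j - 1))"
  proof (rule poly_eqI)
    fix t
    show "coeff \<Delta> t = coeff (smult \<delta> (monom 1 (j - 1))) t"
    proof (cases "t < j - 1")
      case True
      thus ?thesis using dvdD monom_1_dvd_iff' by (auto simp: coeff_monom)
    next
      case False
      thus ?thesis using dD unfolding \<delta>_def
        by (cases "t = j - 1") (auto simp: coeff_monom intro!: coeff_eq_0)
    qed
  qed
  have dlc: "\<delta> * lead_coeff A = lead_coeff S0 * v1"
  proof -
    have "coeff (\<Delta> * A) ((j - 1) + d) = \<delta> * lead_coeff A"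
      unfolding \<delta>_def using coeff_mult_le[OF dD, of A d] dA by simp
    moreover have "coeff ((monom 1 (j - 1) * S0) * V1) ((d - 1) + j) = lead_coeff S0 * v1"
    proof -
      have "coeff (monom 1 (j - 1) * S0) (d - 1) = lead_coeff S0"
        using coeff_monom_mult_shift[of "j - 1" S0 "d - j"] dS0 j1 jd by simp
      thus ?thesis using coeff_mult_le[OF dE dV1] unfolding v1_def by simp
    qed
    moreover have "coeff ((monom 1 j * S1) * Vj) ((d - 1) + j) = 0"
    proof (rule coeff_eq_0)
      have "degree ((monom 1 j * S1) * Vj) \<le> d - \<beta> + (j - 1)"
        by (rule order_trans[OF degree_mult_le add_mono[OF dF dVj]])
      thus "degree ((monom 1 j * S1) * Vj) < d - 1 + j" using b1 j1 jd by simp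
    qed
    moreover have "(j - 1) + d = (d - 1) + j" using j1 jd by simp
    ultimately show ?thesis unfolding DA coeff_diff by simp
  qed
  have delta: "\<delta> \<noteq> 0" using dlc lcS0 v1 by auto
  have s0: "s \<noteq> 0"
  proof
    assume "s = 0"
    then obtain U V where UV: "U \<noteq> 0 \<or> V \<noteq> 0" "degree U < k" "degree V < k"
      and G0: "\<forall>c. (c < k \<or> (d \<le> c \<and> c < d + k)) \<longrightarrow> coeff (U * A + V * B) c = 0"
      using kernel_level[OF k1] unfolding s_def by blast
    define G where "G = U * A + V * B"
    have dvdG: "monom 1 k dvd G" unfolding monom_1_dvd_iff' G_def using G0 by blast
    have dG: "degree G \<le> d - 1"
    proof (rule degree_le, intro allI impI)
      fix c assume c: "d - 1 < c"
      show "coeff G c = 0"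
      proof (cases "c < d + k")
        case True
        thus ?thesis using G0 c jd unfolding G_def by auto
      next
        case False
        have "degree (U * A) \<le> k - 1 + d" using degree_mult_le[of U A] UV(2) dA by simp
        moreover have "degree (V * B) \<le> k - 1 + d" using degree_mult_le[of V B] UV(3) dB by simp
        ultimately have "degree G \<le> k - 1 + d" unfolding G_def
          using degree_add_le by blast
        thus ?thesis using False k1 by (intro coeff_eq_0) auto
      qed
    qed
    define P' where "P' = U * V1 - V * U1"
    define Q' where "Q' = Uj * V - Vj * U"
    have PA: "P' * A = G * V1 - (monom 1 j * S1) * V"
      unfolding G_def F[symmetric] P'_def by (simp add: algebra_simps)
    have FT: "monom 1 j * S1 = monom 1 (j + \<alpha>) * T" unfolding S1T by (simp add: mult_monom mult.assoc[symmetric])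
    have "monom 1 (j + \<alpha>) dvd P'"
    proof -
      have "monom 1 (j + \<alpha>) dvd G * V1"
        by (rule dvd_mult2, rule monom_dvd_le[OF dvdG]) (simp add: k_def)
      moreover have "monom 1 (j + \<alpha>) dvd (monom 1 j * S1) * V" unfolding FT by simp
      ultimately have "monom 1 (j + \<alpha>) dvd P' * A" unfolding PA by (rule dvd_diff)
      thus ?thesis using monom_dvd_mult_cancel A0 by blast
    qed
    moreover have "P' = 0 \<or> degree P' < j + \<alpha>"
    proof (cases "P' = 0")
      case False
      have "degree (G * V1) \<le> d - 1 + j" by (rule order_trans[OF degree_mult_le add_mono[OF dG dV1]])
      moreover have "degree ((monom 1 j * S1) * V) \<le> d - \<beta> + (k - 1)"
        by (rule order_trans[OF degree_mult_le add_mono[OF dF]]) (use UV(3) in simp)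
      ultimately have "degree (P' * A) \<le> d + j + \<alpha> - 1"
        unfolding PA using degree_diff_le_max[of "G * V1" "(monom 1 j * S1) * V"] b1 bd jd j1
        unfolding k_def by auto
      moreover have "degree (P' * A) = degree P' + d" using False A dA by (simp add: degree_mult_eq)
      ultimately show ?thesis using j1 by linarith
    qed simp
    ultimately have P'0: "P' = 0" using monom_dvd_degree by fastforce
    have DG: "\<Delta> * G = P' * (monom 1 (j - 1) * S0) + Q' * (monom 1 j * S1)"
      unfolding E[symmetric] F[symmetric] G_def \<Delta>_def P'_def Q'_def by (simp add: algebra_simps)
    hence DG': "\<Delta> * G = monom 1 (j + \<alpha>) * (Q' * T)" unfolding P'0 FT by (simp add: mult_ac)
    have "monom 1 ((j + \<alpha>) + (j + \<beta> - 1)) dvd monom 1 (j + \<alpha>) * (Q' * T)"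
    proof -
      have "monom 1 ((j - 1) + k) dvd \<Delta> * G" unfolding Dmon
        by (rule monom_dvd_mult[OF _ dvdG]) (rule dvd_smult, simp)
      moreover have "(j - 1) + k = (j + \<alpha>) + (j + \<beta> - 1)" unfolding k_def using j1 by simp
      ultimately show ?thesis unfolding DG' by simp
    qed
    hence "monom 1 (j + \<beta> - 1) dvd Q' * T" by (rule monom_dvd_shift_cancel)
    hence dvdQ': "monom 1 (j + \<beta> - 1) dvd Q'" using monom_dvd_mult_cancel T0 by blast
    have Q'0: "Q' = 0"
    proof (rule ccontr)
      assume Q': "Q' \<noteq> 0"
      have "degree (\<Delta> * G) \<le> (j - 1) + (d - 1)" by (rule order_trans[OF degree_mult_le add_mono[OF dD dG]])
      moreover have "degree (monom 1 (j + \<alpha>) * (Q' * T)) = (j + \<alpha>) + (degree Q' + m)"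
        using Q' T degT by (simp add: degree_mult_eq degree_monom_eq)
      ultimately have "degree Q' + d - \<beta> \<le> j + d - 2" unfolding DG' m_def k_def using kd j1 jd
        unfolding k_def by simp
      moreover have "j + \<beta> - 1 \<le> degree Q'" using monom_dvd_degree[OF dvdQ' Q'] .
      ultimately show False using j1 b1 bd jd by simp
    qed
    have "\<Delta> * U = P' * Uj + Q' * U1" unfolding \<Delta>_def P'_def Q'_def by (simp add: algebra_simps)
    hence "U = 0" using P'0 Q'0 delta Dmon by simp
    moreover have "\<Delta> * V = P' * Vj + Q' * V1" unfolding \<Delta>_def P'_def Q'_def by (simp add: algebra_simps)
    hence "V = 0" using P'0 Q'0 delta Dmon by simp
    ultimately show False using UV(1) by simp
  qed
  define c where "c = lead_coeff S1 * s"
  have c0: "c \<noteq> 0" using S1 s0 unfolding c_def by simp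
  define P where "P = smult c S0"
  have P0: "P \<noteq> 0" using c0 S0 unfolding P_def by simp
  have dP: "degree P = degree T + \<alpha> + \<beta>"
    using dS0 degT kd c0 unfolding P_def m_def k_def by simp
  define Q where "Q = squo P S1"
  define R where "R = srem P S1"
  have QR: "degree Q = \<alpha> + \<beta>" "R = 0 \<or> degree R < m" "P = Q * T + monom 1 \<beta> * R"
    using squo_srem[OF P0 T0 dP] unfolding Q_def R_def S1T[symmetric] degT by auto
  have goal: "smult (lead_coeff S1 * poly Sk 0) S0 = P" unfolding P_def c_def pSk ..
  have dmj: "d - j = (\<alpha> + \<beta>) + m" unfolding m_def k_def using kd unfolding k_def by simp
  have lcT: "lead_coeff T \<noteq> 0" using T by simp
  have lcQ: "coeff Q (\<alpha> + \<beta>) = s * lead_coeff S0"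
  proof -
    have e1: "coeff P (d - j) = c * lead_coeff S0" unfolding P_def using dS0 by simp
    have e2: "coeff (Q * T) (d - j) = coeff Q (\<alpha> + \<beta>) * lead_coeff T"
      unfolding dmj using coeff_mult_le[of Q "\<alpha> + \<beta>" T m] QR(1) degT by simp
    have e3: "coeff (monom 1 \<beta> * R) (d - j) = 0"
    proof (cases "R = 0")
      case False
      have "degree (monom 1 \<beta> * R) \<le> \<beta> + degree R" by (rule degree_monom_mult_le)
      thus ?thesis using QR(2) False dmj by (intro coeff_eq_0) auto
    qed simp
    have "c * lead_coeff S0 = coeff Q (\<alpha> + \<beta>) * lead_coeff T"
      using e1 e2 e3 QR(3) by (metis add.right_neutral coeff_add)
    hence "lead_coeff T * (s * lead_coeff S0) = lead_coeff T * coeff Q (\<alpha> + \<beta>)"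
      unfolding c_def lcS1 by (simp add: mult_ac)
    thus ?thesis using lcT by simp
  qed
  define U' where "U' = [:c:] * (monom 1 (\<alpha> + 1) * Uj) - Q * U1"
  define V' where "V' = [:c:] * (monom 1 (\<alpha> + 1) * Vj) - Q * V1"
  have FT: "monom 1 j * S1 = monom 1 (j + \<alpha>) * T" unfolding S1T by (simp add: mult_monom mult.assoc[symmetric])
  have mm: "monom 1 (\<alpha> + 1) * monom 1 (j - 1) = (monom 1 (j + \<alpha>) :: complex poly)"
    using j1 by (simp add: mult_monom add.commute)
  have UV': "U' * A + V' * B = monom 1 k * R"
  proof -
    have "U' * A + V' * B = [:c:] * (monom 1 (\<alpha> + 1) * (Uj * A + Vj * B)) - Q * (U1 * A + V1 * B)"
      unfolding U'_def V'_def by (simp add: algebra_simps)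
    also have "\<dots> = [:c:] * ((monom 1 (\<alpha> + 1) * monom 1 (j - 1)) * S0) - Q * (monom 1 j * S1)"
      unfolding E F by (simp add: mult.assoc)
    also have "\<dots> = monom 1 (j + \<alpha>) * (P - Q * T)"
      unfolding mm FT P_def by (simp add: algebra_simps)
    also have "\<dots> = monom 1 (j + \<alpha>) * (monom 1 \<beta> * R)" using QR(3) by simp
    also have "\<dots> = monom 1 k * R" unfolding k_def by (simp add: mult_monom mult.assoc[symmetric])
    finally show ?thesis .
  qed
  have dQ: "degree Q \<le> \<alpha> + \<beta>" using QR(1) by simp
  have dX1: "degree ([:c:] * (monom 1 (\<alpha> + 1) * Uj)) \<le> k"
  proof -
    have "degree ([:c:] * (monom 1 (\<alpha> + 1) * Uj)) \<le> 0 + ((\<alpha> + 1) + (j - 1))"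
      by (rule order_trans[OF degree_mult_le add_mono]) (use dUj in \<open>auto intro: order_trans[OF degree_monom_mult_le]\<close>)
    thus ?thesis using j1 b1 unfolding k_def by simp
  qed
  have dX2: "degree ([:c:] * (monom 1 (\<alpha> + 1) * Vj)) \<le> \<alpha> + j"
  proof -
    have "degree ([:c:] * (monom 1 (\<alpha> + 1) * Vj)) \<le> 0 + ((\<alpha> + 1) + (j - 1))"
      by (rule order_trans[OF degree_mult_le add_mono]) (use dVj in \<open>auto intro: order_trans[OF degree_monom_mult_le]\<close>)
    thus ?thesis using j1 by simp
  qed
  have dQU1: "degree (Q * U1) \<le> k" unfolding k_def
    using order_trans[OF degree_mult_le add_mono[OF dQ dU1]] by simp
  have dQV1: "degree (Q * V1) \<le> k" unfolding k_def
    using order_trans[OF degree_mult_le add_mono[OF dQ dV1]] by simp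
  have dU': "degree U' \<le> k" unfolding U'_def
    using degree_diff_le_max[of "[:c:] * (monom 1 (\<alpha> + 1) * Uj)" "Q * U1"] dX1 dQU1 by simp
  have dV': "degree V' \<le> k" unfolding V'_def
    using degree_diff_le_max[of "[:c:] * (monom 1 (\<alpha> + 1) * Vj)" "Q * V1"] dX2 dQV1 unfolding k_def by simp
  define y where "y = (\<lambda>r. if r \<le> k then coeff U' r else coeff V' (r - (k + 1)))"
  have pU: "pairU (k + 1) y = U'"
  proof (rule poly_eqI)
    fix t show "coeff (pairU (k + 1) y) t = coeff U' t"
    proof (cases "t < k + 1")
      case False
      have "coeff U' t = 0" by (rule coeff_eq_0) (use dU' False in simp)
      thus ?thesis unfolding coeff_pairU using False by simp
    qed (simp add: coeff_pairU y_def)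
  qed
  have pV: "pairV (k + 1) y = V'"
  proof (rule poly_eqI)
    fix t show "coeff (pairV (k + 1) y) t = coeff V' t"
    proof (cases "t < k + 1")
      case False
      have "coeff V' t = 0" by (rule coeff_eq_0) (use dV' False in simp)
      thus ?thesis unfolding coeff_pairV using False by simp
    qed (simp add: coeff_pairV y_def)
  qed
  have hyp: "(\<Sum>r<2*(k + 1). y r * coeff (rowp A B (k + 1) r) (colp d (k + 1) (k + 1 - 1) c')) = 0"
    if c': "c' < 2*(k + 1)" "c' \<noteq> k + 1 - 1" for c'
  proof -
    have "(\<Sum>r<2*(k + 1). y r * coeff (rowp A B (k + 1) r) (colp d (k + 1) (k + 1 - 1) c'))
        = coeff (pairU (k + 1) y * A + pairV (k + 1) y * B) (colp d (k + 1) (k + 1 - 1) c')"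
      unfolding pair_comb coeff_sum by simp
    also have "\<dots> = coeff (monom 1 k * R) (colp d (k + 1) (k + 1 - 1) c')" unfolding pU pV UV' ..
    also have "\<dots> = 0"
    proof (cases "c' < k")
      case True
      hence "colp d (k + 1) (k + 1 - 1) c' = c'" unfolding colp_def by simp
      thus ?thesis using True by (simp add: coeff_monom_mult)
    next
      case False
      hence ge: "colp d (k + 1) (k + 1 - 1) c' \<ge> d" using c' unfolding colp_def by auto
      show ?thesis
      proof (cases "R = 0")
        case False
        have "degree (monom 1 k * R) \<le> k + degree R" by (rule degree_monom_mult_le)
        hence "degree (monom 1 k * R) < d" using QR(2) False unfolding m_def using kd by auto
        thus ?thesis using ge by (intro coeff_eq_0) auto
      qed simp
    qed
    finally show ?thesis .
  qed
  have k1': "1 \<le> k + 1" by simp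
  have prp: "zc (k + 1) (2*(k + 1) - 1) * y r' = y (2*(k + 1) - 1) * zc (k + 1) r'"
    if "r' < 2*(k + 1)" for r'
    by (rule proportional_level[OF k1' hyp that]) auto
  define zp where "zp = zc (k + 1) (2*(k + 1) - 1)"
  define yp where "yp = y (2*(k + 1) - 1)"
  have yp: "yp = - (s * lead_coeff S0 * v1)"
  proof -
    have "yp = coeff V' k" unfolding yp_def y_def by simp
    also have "\<dots> = c * coeff (monom 1 (\<alpha> + 1) * Vj) k - coeff (Q * V1) k"
      unfolding V'_def by simp
    also have "coeff (monom 1 (\<alpha> + 1) * Vj) k = 0"
    proof (rule coeff_eq_0)
      have "degree (monom 1 (\<alpha> + 1) * Vj) \<le> (\<alpha> + 1) + (j - 1)"
        by (rule order_trans[OF degree_monom_mult_le]) (use dVj in simp)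
      thus "degree (monom 1 (\<alpha> + 1) * Vj) < k" using j1 b1 unfolding k_def by simp
    qed
    also have "coeff (Q * V1) k = coeff Q (\<alpha> + \<beta>) * v1"
      unfolding k_def v1_def using coeff_mult_le[OF dQ dV1] by (simp add: add.commute add.left_commute)
    finally show ?thesis unfolding lcQ by simp
  qed
  obtain e where zp: "zp = (-1)^e * lead_coeff A * s"
    using last_cofactor[of "k + 1"] k1 unfolding zp_def s_def by auto
  define Uz where "Uz = pairU (k + 1) (zc (k + 1))"
  define Vz where "Vz = pairV (k + 1) (zc (k + 1))"
  have eqU: "smult zp U' = smult yp Uz"
  proof (rule poly_eqI)
    fix t
    show "coeff (smult zp U') t = coeff (smult yp Uz) t"
    proof (cases "t < k + 1")
      case True
      hence "coeff U' t = y t" unfolding y_def by simp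
      thus ?thesis using prp[of t] True unfolding Uz_def zp_def yp_def by (simp add: coeff_pairU)
    next
      case False
      hence "coeff U' t = 0" using dU' by (intro coeff_eq_0) auto
      thus ?thesis using False unfolding Uz_def by (simp add: coeff_pairU)
    qed
  qed
  have eqV: "smult zp V' = smult yp Vz"
  proof (rule poly_eqI)
    fix t
    show "coeff (smult zp V') t = coeff (smult yp Vz) t"
    proof (cases "t < k + 1")
      case True
      hence "coeff V' t = y (k + 1 + t)" unfolding y_def by simp
      thus ?thesis using prp[of "k + 1 + t"] True unfolding Vz_def zp_def yp_def by (simp add: coeff_pairV)
    next
      case False
      hence "coeff V' t = 0" using dV' by (intro coeff_eq_0) auto
      thus ?thesis using False unfolding Vz_def by (simp add: coeff_pairV)
    qed
  qed
  define W where "W = Uj * Vz - Vj * Uz"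
  have keyQ: "Uj * V' - Vj * U' = - (Q * \<Delta>)"
    unfolding U'_def V'_def \<Delta>_def by (simp add: algebra_simps)
  have "smult zp (- (Q * \<Delta>)) = smult yp W"
  proof -
    have "smult zp (- (Q * \<Delta>)) = Uj * smult zp V' - Vj * smult zp U'"
      unfolding keyQ[symmetric] by (simp only: smult_diff_right mult_smult_right)
    also have "\<dots> = smult yp W" unfolding eqU eqV W_def by (simp only: smult_diff_right mult_smult_right)
    finally show ?thesis .
  qed
  hence eqW: "smult (- (zp * \<delta>)) (monom 1 (j - 1) * Q) = smult yp W"
    unfolding Dmon by (simp add: mult.commute)
  define \<kappa> where "\<kappa> = lead_coeff A * s * \<delta>"
  have \<kappa>: "\<kappa> \<noteq> 0" unfolding \<kappa>_def using lcA s0 delta by simp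
  have ypk: "yp = - \<kappa>" unfolding yp \<kappa>_def using dlc by (simp add: mult_ac)
  have zpk: "- (zp * \<delta>) = - ((-1)^e * \<kappa>)" unfolding zp \<kappa>_def by (simp add: mult_ac)
  have sq: "(-1::complex)^e * (-1)^e = 1" by (simp flip: power_mult_distrib)
  have cQ: "coeff Q t = (-1)^e * coeff W (t + (j - 1))" for t
  proof -
    have "coeff (smult (- (zp * \<delta>)) (monom 1 (j - 1) * Q)) (t + (j - 1)) = coeff (smult yp W) (t + (j - 1))"
      using eqW by simp
    hence "- ((-1)^e * \<kappa>) * coeff Q t = - \<kappa> * coeff W (t + (j - 1))"
      unfolding zpk ypk coeff_smult coeff_monom_mult_shift .
    hence "\<kappa> * ((-1)^e * coeff Q t) = \<kappa> * coeff W (t + (j - 1))" by (simp add: mult_ac)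
    hence "(-1)^e * coeff Q t = coeff W (t + (j - 1))" using \<kappa> by simp
    hence "(-1)^e * ((-1)^e * coeff Q t) = (-1)^e * coeff W (t + (j - 1))" by simp
    thus ?thesis using sq by (simp add: mult.assoc[symmetric])
  qed
  have WD: "in_Dpoly D W" unfolding W_def Uj_def Vj_def Uz_def Vz_def
    using pair_in_D[OF D j1] pair_in_D[OF D k1']
    by (intro in_Dpoly_diff in_Dpoly_mult D(1)) auto
  have m1D: "(-1::complex)^e \<in> D"
    using D(1) by (intro subring_C_power subring_C_uminus) (auto simp: subring_C_def)
  have QD: "in_Dpoly D Q"
    unfolding in_Dpoly_def cQ using WD m1D D(1) unfolding in_Dpoly_def subring_C_def by auto
  have S0D: "in_Dpoly D S0" unfolding S0_def by (rule symsubres_in_D[OF D j1])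
  have S1D: "in_Dpoly D S1" unfolding S1_def by (rule symsubres_in_D[OF D]) simp
  have sD: "s \<in> D" unfolding s_def by (rule Sylv_in_D[OF D k1])
  have cD: "c \<in> D" unfolding c_def using S1D sD D(1) unfolding in_Dpoly_def subring_C_def by auto
  have PD: "in_Dpoly D P" unfolding P_def by (rule in_Dpoly_smult[OF D(1) cD S0D])
  have TD: "in_Dpoly D T"
  proof -
    have "coeff T t = coeff S1 (t + \<alpha>)" for t unfolding S1T coeff_monom_mult_shift ..
    thus ?thesis using S1D unfolding in_Dpoly_def by simp
  qed
  have RD: "in_Dpoly D R"
  proof -
    have "monom 1 \<beta> * R = P - Q * T" using QR(3) by simp
    hence "coeff R t = coeff (P - Q * T) (t + \<beta>)" for t by (metis coeff_monom_mult_shift)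
    moreover have "in_Dpoly D (P - Q * T)" by (intro in_Dpoly_diff in_Dpoly_mult D(1) PD QD TD)
    ultimately show ?thesis unfolding in_Dpoly_def by simp
  qed
  show ?thesis unfolding goal using QD RD unfolding Q_def R_def by simp
qed

end

theorem proposition5:
  fixes D :: "complex set" and A B :: "complex poly" and j \<alpha> \<beta> :: nat
  assumes "subring_C D"
    and "in_Dpoly D A" and "in_Dpoly D B"
    and "degree B = degree A"
    and "val A = 0" and "val B = 0"
    and "1 \<le> j" and "j \<le> degree A - 1"
    and "defective A B j \<alpha> \<beta>"
  shows "in_Dpoly D (squo (smult (lead_coeff (symsubres A B (int j + 1))
                                  * poly (symsubres A B (int (j + \<alpha> + \<beta>))) 0)
                            (symsubres A B (int j)))
                      (symsubres A B (int j + 1)))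
       \<and> in_Dpoly D (srem (smult (lead_coeff (symsubres A B (int j + 1))
                                  * poly (symsubres A B (int (j + \<alpha> + \<beta>))) 0)
                            (symsubres A B (int j)))
                      (symsubres A B (int j + 1)))"
proof -
  note D = assms(1-3)
  define d where "d = degree A"
  interpret sres A B d using assms(4) by unfold_locales (simp_all add: d_def)
  define S0 where "S0 = symsubres A B (int j)"
  define S1 where "S1 = symsubres A B (int j + 1)"
  define k where "k = j + \<alpha> + \<beta>"
  define Sk where "Sk = symsubres A B (int k)"
  have def: "val S0 = 0" "degree S0 = d - j" "S1 \<noteq> 0" "val S1 = \<alpha>" "degree S1 = d - j - \<beta>"
    using assms(9) unfolding defective_def Let_def S0_def S1_def d_def by auto
  have j1: "1 \<le> j" and jd: "j < d" using assms(7,8) unfolding d_def by auto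
  have ij: "int (j + 1) = int j + 1" by simp
  have S1': "S1 = symsubres A B (int (j + 1))" unfolding S1_def ij ..
  have dS1le: "degree S1 \<le> d - (j + 1)" unfolding S1' by (rule degree_symsubres) simp
  have b1: "1 \<le> \<beta>"
  proof (rule ccontr)
    assume "\<not> 1 \<le> \<beta>"
    hence "\<beta> = 0" by simp
    thus False using def(5) dS1le jd by simp
  qed
  have A: "A \<noteq> 0" using jd dA by auto
  have A0: "coeff A 0 \<noteq> 0" using assms(5) A unfolding val_def
    by (metis order_root poly_0_coeff_0)
  have lcA: "lead_coeff A \<noteq> 0" using A by simp
  have S0: "S0 \<noteq> 0" using def(2) jd by auto
  have S00: "coeff S0 0 \<noteq> 0" using def(1) S0 unfolding val_def by (metis order_root poly_0_coeff_0)
  have goal_eq: "?thesis \<longleftrightarrow> in_Dpoly D (squo (smult (lead_coeff S1 * poly Sk 0) S0) S1) \<and>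
                  in_Dpoly D (srem (smult (lead_coeff S1 * poly Sk 0) S0) S1)"
    unfolding S0_def S1_def Sk_def k_def by simp
  show ?thesis
  proof (cases "\<beta> \<le> d - j")
    case False
    have "degree S1 = 0" using def(5) False by simp
    hence a0: "\<alpha> = 0" using def(3,4) order_degree[of S1 0] unfolding val_def by simp
    have k1: "1 \<le> k" and kd: "d < k" unfolding k_def using j1 False by auto
    have "poly Sk 0 = det (Sylv A B d k 0)"
      unfolding Sk_def poly_0_coeff_0 symsubres_coeff[OF k1 dA] by simp
    also have "\<dots> = 0"
      unfolding Sylv_mk[OF dA dB k1]
      by (rule det_mk_identical_cols[of d _ k]) (use kd in \<open>auto simp: colp_def\<close>)
    finally have Z: "smult (lead_coeff S1 * poly Sk 0) S0 = 0" by simp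
    have "squo 0 S1 = 0 \<and> srem 0 S1 = 0"
      using squo_srem_zero[OF def(3)] def(4) a0 by simp
    thus ?thesis unfolding goal_eq Z using in_Dpoly_0[OF D(1)] by simp
  next
    case True
    have "in_Dpoly D (squo (smult (lead_coeff S1 * poly Sk 0) S0) S1) \<and>
          in_Dpoly D (srem (smult (lead_coeff S1 * poly Sk 0) S0) S1)"
      by (rule main_case[OF D j1 jd A0 S0_def S1' k_def Sk_def def(2) S00 def(3) def(4) def(5) b1 True])
    thus ?thesis unfolding goal_eq .
  qed
qed

end
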